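(* Let $n\geq 1$ and $k\geq 0$ be integers, let $0\leq i\leq n-1$ and $0\leq j\leq k$, and define \[ i'=\Big\lfloor \frac{(n+1)k-(k+1)i-j}{k+1}\Big\rfloor,\qquad j'=(n+1)k-(k+1)i-j-(k+1)i'. \] Then the map $\varphi$ (defined in the context) restricts to a bijection from $\Gamma^k(n,i;j)$ onto $\Gamma^k(n,i';j')$.
   Context: For a permutation $\pi=\pi_1\cdots\pi_n$ of $[n]=\{1,\dots,n\}$, $\mathrm{des}(\pi)$ is the number of $m\in[n-1]$ with $\pi_m>\pi_{m+1}$, and $\mathrm{maxdrop}(\pi)=\max\{m-\pi_m:1\leq m\leq n\}$. $A_{n,k}$ is the set of permutations of $[n]$ with $\mathrm{maxdrop}(\pi)\leq k$. For $0\le i\le n-1$ and $0\le j\le k$, $\Gamma^k(n,i;j)$ is the set of $\pi\in A_{n,k}$ with $\mathrm{des}(\pi)=i$ and $\pi_n=n-k+j$. For a permutation $\sigma$ of $[n-1]$ and $1\leq r\leq n$, $\sigma\leftarrow r$ is the permutation of $[n]$ obtained by increasing every entry of $\sigma$ that is $\geq r$ by $1$ and then appending $r$ at the end (e.g. $3421\leftarrow 3=45213$). The map $\varphi:A_{n,k}\to A_{n,k}$ (for fixed $k$, all $n\ge1$) is defined recursively: $\varphi(1)=1$; for $n\geq 2$ and $\pi\in A_{n,k}$, let $i=\mathrm{des}(\pi)$, $j=\pi_n-n+k$, let $i',j'$ be given by $i'=\lfloor((n+1)k-(k+1)i-j)/(k+1)\rfloor$ and $j'=(n+1)k-(k+1)i-j-(k+1)i'$,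 let $\pi'$ be the permutation of $[n-1]$ order-isomorphic to $\pi_1\cdots\pi_{n-1}$ (so $\pi=\pi'\leftarrow\pi_n$), and set $\varphi(\pi)=\varphi(\pi')\leftarrow(n-k+j')$. *)

theory Defs
  imports Main
begin

text \<open>Permutations of [n] are represented as lists: pi = [pi_1, ..., pi_n] is the list
  whose (m-1)-th entry (0-indexed) is pi_m.\<close>

definition is_perm :: "nat \<Rightarrow> nat list \<Rightarrow> bool" where
  "is_perm n p \<longleftrightarrow> length p = n \<and> distinct p \<and> set p = {1..n}"

definition des :: "nat list \<Rightarrow> nat" where
  "des p = card {m. m + 1 < length p \<and> p ! m > p ! (m + 1)}"

definition maxdrop :: "nat list \<Rightarrow> int" where
  "maxdrop p = Max {int (m + 1) - int (p ! m) | m. m < length p}"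

definition A :: "nat \<Rightarrow> nat \<Rightarrow> nat list set" where
  "A n k = {p. is_perm n p \<and> maxdrop p \<le> int k}"

definition Gamma :: "nat \<Rightarrow> nat \<Rightarrow> int \<Rightarrow> int \<Rightarrow> nat list set" where
  "Gamma k n i j = {p \<in> A n k. int (des p) = i \<and> int (last p) = int n - int k + j}"

definition ins_last :: "nat list \<Rightarrow> nat \<Rightarrow> nat list" where
  "ins_last s r = map (\<lambda>x. if x \<ge> r then x + 1 else x) s @ [r]"

definition std_init :: "nat list \<Rightarrow> nat list" where
  "std_init p = map (\<lambda>x. if x > last p then x - 1 else x) (butlast p)"

lemma length_std_init [simp]: "length (std_init p) = length p - 1"
  by (simp add: std_init_def)

fun phi :: "nat \<Rightarrow> nat list \<Rightarrow> nat list" where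
  "phi k p = (if length p \<le> 1 then p else
     (let n = int (length p);
          i = int (des p);
          j = int (last p) - n + int k;
          X = (n + 1) * int k - (int k + 1) * i - j;
          i' = X div (int k + 1);
          j' = X - (int k + 1) * i'
      in ins_last (phi k (std_init p)) (nat (n - int k + j'))))"

end

theory Submission imports Defs begin
declare phi.simps[simp del]

lemma dm: "0 < (m::int) \<Longrightarrow> 0 \<le> b \<Longrightarrow> b < m \<Longrightarrow> (m*a+b) div m = a \<and> (m*a+b) mod m = b"
  by (simp add: add.commute)

lemma arith:
  fixes K n i0 r0 r :: int
  assumes K: "K \<ge> 0" and b1: "n - K \<le> r0" "r0 \<le> n" and b2: "n + 1 - K \<le> r" "r \<le> n+1"
  defines "d \<equiv> (if r0 \<ge> r then 1 else 0::int)"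
  defines "X0 \<equiv> (K+1)*(n - i0) - r0"
  defines "X \<equiv> (K+1)*(n + 1 - (i0 + d)) - r"
  shows "X div (K+1) = X0 div (K+1) + (if X0 mod (K+1) > X mod (K+1) then 1 else 0)"
proof -
  define a0 where "a0 = X0 div (K+1)"
  define b0 where "b0 = X0 mod (K+1)"
  have X0e: "X0 = (K+1)*a0 + b0" unfolding a0_def b0_def by simp
  have Kp: "0 < K+1" using K by simp
  have b0b: "0 \<le> b0" "b0 < K+1" unfolding b0_def using pos_mod_sign[OF Kp] pos_mod_bound[OF Kp] by auto
  define j0 where "j0 = r0 - n + K"
  define j where "j = r - n - 1 + K"
  have Xe: "X = (K+1)*a0 + b0 + K + j0 - j - (K+1)*d"
    unfolding X_def j0_def j_def using X0e unfolding X0_def by (simp add: algebra_simps)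
  have jb: "0 \<le> j0" "j0 \<le> K" "0 \<le> j" "j \<le> K" using b1 b2 unfolding j0_def j_def by auto
  show ?thesis
  proof (cases "r0 \<ge> r")
    case True
    hence d: "d = 1" and jj: "j0 > j" unfolding d_def j0_def j_def by auto
    show ?thesis
    proof (cases "b0 + j0 - j - 1 \<le> K")
      case True
      have "X = (K+1)*a0 + (b0 + j0 - j - 1)" using Xe d by (simp add: algebra_simps)
      hence "X div (K+1) = a0 \<and> X mod (K+1) = b0 + j0 - j - 1" using dm[of "K+1" "b0 + j0 - j - 1" a0] True jj b0b K by auto
      then show ?thesis unfolding a0_def[symmetric] b0_def[symmetric] using True jj b0b K by auto
    next
      case False
      have "X = (K+1)*(a0+1) + (b0 + j0 - j - 1 - (K+1))" using Xe d by (simp add: algebra_simps)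
      hence "X div (K+1) = a0+1 \<and> X mod (K+1) = b0 + j0 - j - 1 - (K+1)" using dm[of "K+1" "b0 + j0 - j - 1 - (K+1)" "a0+1"] False jj b0b K jb by auto
      then show ?thesis unfolding a0_def[symmetric] b0_def[symmetric] using False jj b0b K jb by auto
    qed
  next
    case False
    hence d: "d = 0" and jj: "j0 \<le> j" unfolding d_def j0_def j_def by auto
    show ?thesis
    proof (cases "b0 + K + j0 - j \<le> K")
      case True
      have "X = (K+1)*a0 + (b0 + K + j0 - j)" using Xe d by (simp add: algebra_simps)
      hence "X div (K+1) = a0 \<and> X mod (K+1) = b0 + K + j0 - j" using dm[of "K+1" "b0 + K + j0 - j" a0] True jj b0b K jb by auto
      then show ?thesis unfolding a0_def[symmetric] b0_def[symmetric] using True jj b0b K jb by auto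
    next
      case False
      have "X = (K+1)*(a0+1) + (b0 + K + j0 - j - (K+1))" using Xe d by (simp add: algebra_simps)
      hence "X div (K+1) = a0+1 \<and> X mod (K+1) = b0 + K + j0 - j - (K+1)" using dm[of "K+1" "b0 + K + j0 - j - (K+1)" "a0+1"] False jj b0b K jb by auto
      then show ?thesis unfolding a0_def[symmetric] b0_def[symmetric] using False jj b0b K jb by auto
    qed
  qed
qed

lemma f_less: "((if a \<ge> r then a + 1 else a) < (if b \<ge> r then b + 1 else (b::nat))) = (a < b)"
  by auto

lemma ins_last_std: "distinct p \<Longrightarrow> p \<noteq> [] \<Longrightarrow> ins_last (std_init p) (last p) = p"
proof -
  assume d: "distinct p" and ne: "p \<noteq> []"
  have p: "p = butlast p @ [last p]" using ne by simp
  have nin: "last p \<notin> set (butlast p)" using d p by (metis distinct_append not_distinct_conv_prefix)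
  have "map (\<lambda>x. if x \<ge> last p then x + 1 else x) (map (\<lambda>x. if x > last p then x - 1 else x) (butlast p)) = butlast p"
    unfolding map_map by (rule map_idI) (use nin in \<open>auto\<close>)
  then show ?thesis unfolding ins_last_def std_init_def using p by (metis)
qed

lemma std_ins[simp]: "std_init (ins_last s r) = s"
  unfolding ins_last_def std_init_def by (induction s) auto

lemma last_ins[simp]: "last (ins_last s r) = r" and length_ins[simp]: "length (ins_last s r) = Suc (length s)"
  unfolding ins_last_def by auto

lemma perm_ins: assumes "is_perm m s" "1 \<le> r" "r \<le> Suc m" shows "is_perm (Suc m) (ins_last s r)"
proof -
  let ?f = "\<lambda>x. if x \<ge> r then x + 1 else (x::nat)"
  have inj: "inj ?f" by (rule injI) (auto split: if_splits)
  have st: "set s = {1..m}" "distinct s" "length s = m" using assms(1) unfolding is_perm_def by auto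
  have im: "?f ` {1..m} = {1..Suc m} - {r}"
  proof
    show "?f ` {1..m} \<subseteq> {1..Suc m} - {r}" by auto
    show "{1..Suc m} - {r} \<subseteq> ?f ` {1..m}"
    proof
      fix y assume y: "y \<in> {1..Suc m} - {r}"
      show "y \<in> ?f ` {1..m}"
      proof (cases "y < r")
        case True thus ?thesis using y assms by (intro image_eqI[of _ _ y]) auto
      next
        case False thus ?thesis using y assms by (intro image_eqI[of _ _ "y - 1"]) auto
      qed
    qed
  qed
  have "distinct (map ?f s)" using st inj_on_subset[OF inj subset_UNIV] by (simp add: distinct_map)
  moreover have "r \<notin> set (map ?f s)" by auto
  moreover have "set (map ?f s) = {1..Suc m} - {r}" using st im by simp
  ultimately show ?thesis unfolding is_perm_def ins_last_def using st assms by auto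
qed

lemma perm_std: assumes "is_perm (Suc m) p" shows "is_perm m (std_init p)"
proof -
  let ?r = "last p"
  let ?g = "\<lambda>x. if x > ?r then x - 1 else (x::nat)"
  have ne: "p \<noteq> []" using assms unfolding is_perm_def by auto
  have p: "p = butlast p @ [?r]" using ne by simp
  have d: "distinct p" and sp: "set p = {1..Suc m}" and lp: "length p = Suc m" using assms unfolding is_perm_def by auto
  have dd: "distinct (butlast p @ [?r])" using d p by simp
  have db: "distinct (butlast p)" and nin: "?r \<notin> set (butlast p)" using dd by auto
  have sb: "set (butlast p) = {1..Suc m} - {?r}"
  proof -
    have "set p = insert ?r (set (butlast p))" using p by (metis Un_insert_right append_Nil2 list.set(2) set_append)
    thus ?thesis using sp nin by auto
  qed
  have rin: "?r \<in> {1..Suc m}" using sp ne last_in_set by blast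
  have inj: "inj_on ?g (set (butlast p))"
  proof (rule inj_onI)
    fix x y assume xy: "x \<in> set (butlast p)" "y \<in> set (butlast p)" "?g x = ?g y"
    have "x \<noteq> ?r" "y \<noteq> ?r" using nin xy by auto
    then show "x = y" using xy(3) by (auto split: if_splits)
  qed
  have im: "?g ` ({1..Suc m} - {?r}) = {1..m}"
  proof
    show "?g ` ({1..Suc m} - {?r}) \<subseteq> {1..m}" using rin by auto
    show "{1..m} \<subseteq> ?g ` ({1..Suc m} - {?r})"
    proof
      fix y assume y: "y \<in> {1..m}"
      show "y \<in> ?g ` ({1..Suc m} - {?r})"
      proof (cases "y < ?r")
        case True thus ?thesis using y by (intro image_eqI[of _ _ y]) auto
      next
        case False thus ?thesis using y rin by (intro image_eqI[of _ _ "y + 1"]) auto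
      qed
    qed
  qed
  show ?thesis unfolding is_perm_def std_init_def using db inj sb im lp by (simp add: distinct_map)
qed

lemma maxdrop_le: assumes "p \<noteq> []" shows "(maxdrop p \<le> c) = (\<forall>m<length p. int (m+1) - int (p!m) \<le> c)"
proof -
  have e: "{int (m + 1) - int (p ! m) | m. m < length p} = (\<lambda>m. int (m + 1) - int (p ! m)) ` {..<length p}" by auto
  show ?thesis unfolding maxdrop_def e using assms by (subst Max_le_iff) auto
qed

lemma des_ins: "des (ins_last s r) = des s + (if s \<noteq> [] \<and> last s \<ge> r then 1 else 0)"
proof -
  let ?f = "\<lambda>x. if x \<ge> r then x + 1 else (x::nat)"
  let ?t = "ins_last s r"
  have tn: "\<And>m. m < length s \<Longrightarrow> ?t ! m = ?f (s!m)" unfolding ins_last_def by (simp add: nth_append)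
  have tl: "?t ! length s = r" unfolding ins_last_def by (simp add: nth_append)
  let ?S = "{m. m + 1 < length s \<and> s ! m > s ! (m + 1)}"
  let ?E = "(if s \<noteq> [] \<and> last s \<ge> r then {length s - 1} else {})"
  have eq: "{m. m + 1 < length ?t \<and> ?t ! m > ?t ! (m + 1)} = ?S \<union> ?E"
  proof (intro set_eqI iffI)
    fix m assume "m \<in> {m. m + 1 < length ?t \<and> ?t ! m > ?t ! (m + 1)}"
    hence m: "m + 1 < Suc (length s)" "?t ! m > ?t ! (m+1)" by auto
    show "m \<in> ?S \<union> ?E"
    proof (cases "m + 1 < length s")
      case True thus ?thesis using m tn[of m] tn[of "m+1"] f_less[of r "s!(m+1)" "s!m"] by auto
    next
      case False
      hence "m + 1 = length s" using m by auto
      moreover hence "s \<noteq> []" by auto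
      moreover have "last s = s ! m" using calculation by (metis add_diff_cancel_right' last_conv_nth)
      ultimately show ?thesis using m tn[of m] tl by (auto split: if_splits)
    qed
  next
    fix m assume "m \<in> ?S \<union> ?E"
    thus "m \<in> {m. m + 1 < length ?t \<and> ?t ! m > ?t ! (m + 1)}"
    proof
      assume "m \<in> ?S" thus ?thesis using tn[of m] tn[of "m+1"] f_less by auto
    next
      assume me: "m \<in> ?E"
      hence "s \<noteq> []" "last s \<ge> r" "m = length s - 1" by (auto split: if_splits)
      moreover have "last s = s ! m" using calculation by (simp add: last_conv_nth)
      ultimately show ?thesis using tn[of m] tl by auto
    qed
  qed
  have fin: "finite ?S" by (rule finite_subset[of _ "{..<length s}"]) auto
  have disj: "?S \<inter> ?E = {}" by auto
  show ?thesis unfolding des_def eq using card_Un_disjoint[OF fin _ disj] by auto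
qed


lemma A_last: assumes "p \<in> A m k" "1 \<le> m" shows "int m - int k \<le> int (last p)" "1 \<le> last p" "last p \<le> m"
proof -
  have pp: "is_perm m p" "maxdrop p \<le> int k" using assms unfolding A_def by auto
  have l: "length p = m" and sp: "set p = {1..m}" using pp unfolding is_perm_def by auto
  have ne: "p \<noteq> []" using l assms by auto
  have ds: "\<forall>i<m. int (i+1) - int (p!i) \<le> int k" using pp(2) maxdrop_le[OF ne] l by auto
  have "int (m - 1 + 1) - int (p ! (m-1)) \<le> int k" using ds[rule_format, of "m-1"] assms(2) by simp
  moreover have "p ! (m-1) = last p" using ne l by (simp add: last_conv_nth)
  ultimately show "int m - int k \<le> int (last p)" using assms by simp
  have "last p \<in> {1..m}" using sp ne last_in_set by blast
  thus "1 \<le> last p" "last p \<le> m" by auto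
qed

lemma A_ins: assumes s: "s \<in> A m k" and m: "1 \<le> m" and r: "1 \<le> r" "r \<le> Suc m" "int (Suc m) - int k \<le> int r"
  shows "ins_last s r \<in> A (Suc m) k"
proof -
  have pp: "is_perm m s" "maxdrop s \<le> int k" using s unfolding A_def by auto
  have l: "length s = m" using pp unfolding is_perm_def by auto
  have ne: "s \<noteq> []" using l m by auto
  have ds: "\<forall>i<m. int (i+1) - int (s!i) \<le> int k" using pp(2) maxdrop_le[OF ne] l by auto
  have "\<forall>i<Suc m. int (i+1) - int (ins_last s r ! i) \<le> int k"
  proof (intro allI impI)
    fix i assume i: "i < Suc m"
    show "int (i+1) - int (ins_last s r ! i) \<le> int k"
    proof (cases "i < m")
      case True
      have "ins_last s r ! i \<ge> s ! i" unfolding ins_last_def using True l by (simp add: nth_append)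
      thus ?thesis using ds True by force
    next
      case False
      hence "i = m" using i by auto
      hence "ins_last s r ! i = r" unfolding ins_last_def using l by (simp add: nth_append)
      thus ?thesis using \<open>i = m\<close> r by simp
    qed
  qed
  moreover have "ins_last s r \<noteq> []" unfolding ins_last_def by simp
  ultimately show ?thesis unfolding A_def using perm_ins[OF pp(1) r(1,2)] maxdrop_le[of "ins_last s r"] l by simp
qed

lemma A_std: assumes p: "p \<in> A (Suc m) k" and m: "1 \<le> m" shows "std_init p \<in> A m k"
proof -
  have pp: "is_perm (Suc m) p" "maxdrop p \<le> int k" using p unfolding A_def by auto
  have l: "length p = Suc m" using pp unfolding is_perm_def by auto
  have ne: "p \<noteq> []" using l by auto
  have ds: "\<forall>i<Suc m. int (i+1) - int (p!i) \<le> int k" using pp(2) maxdrop_le[OF ne] l by auto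
  have rl: "int (Suc m) - int k \<le> int (last p)" using A_last[OF p] by simp
  have ne2: "std_init p \<noteq> []" using l m by (metis length_std_init diff_Suc_1 list.size(3) not_one_le_zero)
  have "\<forall>i<m. int (i+1) - int (std_init p ! i) \<le> int k"
  proof (intro allI impI)
    fix i assume i: "i < m"
    have e: "std_init p ! i = (if p!i > last p then p!i - 1 else p!i)"
      unfolding std_init_def using i l by (simp add: nth_butlast)
    show "int (i+1) - int (std_init p ! i) \<le> int k"
    proof (cases "p!i > last p")
      case True thus ?thesis using e rl i by simp
    next
      case False thus ?thesis using e ds i by simp
    qed
  qed
  thus ?thesis unfolding A_def using perm_std[OF pp(1)] maxdrop_le[OF ne2] l by simp
qed

definition XX :: "nat \<Rightarrow> nat list \<Rightarrow> int" where
  "XX k p = (int (length p) + 1) * int k - (int k + 1) * int (des p) - (int (last p) - int (length p) + int k)"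

lemma XX_eq: "XX k p = (int k + 1) * (int (length p) - int (des p)) - int (last p)"
  unfolding XX_def by (simp add: algebra_simps)

lemma phi_step: "length p \<ge> 2 \<Longrightarrow> phi k p = ins_last (phi k (std_init p)) (nat (int (length p) - int k + XX k p mod (int k + 1)))"
  apply (subst phi.simps)
  apply (simp only: Let_def minus_mult_div_eq_mod XX_def)
  by simp

lemma phi_one: "length p \<le> 1 \<Longrightarrow> phi k p = p"
  by (subst phi.simps) simp

lemma pos_r: fixes K L i r X :: int assumes "K \<ge> 0" "1 \<le> r" "r \<le> L" "X = (K+1)*(L - i) - r"
  shows "1 \<le> L - K + X mod (K+1)"
proof (cases "L \<le> K")
  case True
  have e: "X = (K+1)*(L - i - 1) + (K + 1 - r)" using assms(4) by (simp add: algebra_simps)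
  have "0 < K+1" "0 \<le> K+1-r" "K+1-r < K+1" using assms True by auto
  from dm[OF this] have "((K+1)*(L - i - 1) + (K + 1 - r)) mod (K+1) = K + 1 - r" by blast
  hence "X mod (K+1) = K + 1 - r" by (simp only: e)
  thus ?thesis using assms by simp
next
  case False
  have "0 \<le> X mod (K+1)" using assms by simp
  thus ?thesis using False by simp
qed


lemma main:
  assumes "1 \<le> n" "p \<in> A n k"
  shows "phi k p \<in> A n k \<and> int (des (phi k p)) = XX k p div (int k + 1)
    \<and> int (last (phi k p)) = int n - int k + XX k p mod (int k + 1) \<and> phi k (phi k p) = p"
  using assms
proof (induction n arbitrary: p rule: nat_induct_at_least)
  case base
  have l: "length p = 1" and sp: "set p = {1}" using base unfolding A_def is_perm_def by auto
  then obtain x where "p = [x]" by (metis One_nat_def length_0_conv length_Suc_conv)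
  hence p: "p = [1]" using sp by auto
  have d: "des p = 0" unfolding des_def using l by simp
  have "XX k p = int k" unfolding XX_def using p d by simp
  moreover have "int k div (int k + 1) = 0" "int k mod (int k + 1) = int k" by simp_all
  ultimately show ?case using phi_one[of p k] l base d p by simp
next
  case (Suc n)
  let ?N = "Suc n"
  let ?K = "int k"
  define p' where "p' = std_init p"
  define r where "r = last p"
  have pA: "p \<in> A ?N k" using Suc by simp
  have perm: "is_perm ?N p" using pA unfolding A_def by auto
  have lp: "length p = ?N" and dp: "distinct p" using perm unfolding is_perm_def by auto
  have ne: "p \<noteq> []" using lp by auto
  have p'A: "p' \<in> A n k" unfolding p'_def using A_std[OF pA Suc(1)] .
  have lp': "length p' = n" unfolding p'_def using lp by simp
  have ne': "p' \<noteq> []" using lp' Suc(1) by auto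
  have F1: "p = ins_last p' r" unfolding p'_def r_def using ins_last_std[OF dp ne] by simp
  have F2: "des p = des p' + (if last p' \<ge> r then 1 else 0)" using des_ins[of p' r] F1 ne' by simp
  have rb: "int ?N - ?K \<le> int r" "1 \<le> r" "r \<le> ?N" unfolding r_def using A_last[OF pA] by auto
  have r0b: "int n - ?K \<le> int (last p')" "1 \<le> last p'" "last p' \<le> n" using A_last[OF p'A Suc(1)] by auto
  from Suc(2)[OF p'A]
  have IH: "phi k p' \<in> A n k" "int (des (phi k p')) = XX k p' div (?K + 1)"
    "int (last (phi k p')) = int n - ?K + XX k p' mod (?K + 1)" "phi k (phi k p') = p'" by auto
  define q' where "q' = phi k p'"
  define b where "b = XX k p mod (?K + 1)"
  define b0 where "b0 = XX k p' mod (?K + 1)"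
  define a where "a = XX k p div (?K + 1)"
  have XXp': "XX k p' = (?K+1)*(int n - int (des p')) - int (last p')" using XX_eq[of k p'] lp' by simp
  have XXp: "XX k p = (?K+1)*(int n + 1 - (int (des p') + (if int (last p') \<ge> int r then 1 else 0))) - int r"
    using XX_eq[of k p] lp F2 unfolding r_def by auto
  have ar: "a = XX k p' div (?K+1) + (if b0 > b then 1 else 0)"
    unfolding a_def b_def b0_def XXp XXp'
    by (rule arith) (use r0b rb in auto)
  have bb: "0 \<le> b" "b \<le> ?K" unfolding b_def using pos_mod_bound[of "?K+1"] by (simp_all add: add1_zle_eq) 
  have r'1: "1 \<le> int ?N - ?K + b" unfolding b_def
    by (rule pos_r[where K="?K" and L="int ?N" and r="int r" and X="XX k p" and i="int (des p)"]) (use rb XX_eq[of k p] lp r_def in auto)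
  define r' where "r' = nat (int ?N - ?K + b)"
  have r'i: "int r' = int ?N - ?K + b" unfolding r'_def using r'1 by simp
  have phip: "phi k p = ins_last q' r'"
    unfolding q'_def r'_def b_def p'_def using phi_step[of p k] lp Suc(1) by simp
  have q'A: "q' \<in> A n k" using IH q'_def by simp
  have lq': "length q' = n" using q'A unfolding A_def is_perm_def by auto
  have qA: "ins_last q' r' \<in> A ?N k"
    by (rule A_ins[OF q'A Suc(1)]) (use r'i r'1 bb in auto)
  have dq: "int (des (ins_last q' r')) = a"
  proof -
    have "q' \<noteq> []" using lq' Suc(1) by auto
    hence "des (ins_last q' r') = des q' + (if last q' \<ge> r' then 1 else 0)" using des_ins by simp
    moreover have "(last q' \<ge> r') = (b0 > b)" using IH(3) r'i unfolding q'_def b0_def by auto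
    ultimately show ?thesis using ar IH(2) q'_def by auto
  qed
  have XXq: "XX k (ins_last q' r') = (?K + 1) * int (des p) + (int r - int ?N + ?K)"
  proof -
    have "XX k p = (?K+1)*a + b" unfolding a_def b_def by simp
    moreover have "XX k p = (int ?N + 1) * ?K - (?K+1) * int (des p) - (int r - int ?N + ?K)"
      unfolding XX_def r_def using lp by simp
    moreover have "XX k (ins_last q' r') = (int ?N + 1) * ?K - (?K+1) * a - b"
      unfolding XX_def using dq r'i lq' by simp
    ultimately show ?thesis by (simp add: algebra_simps)
  qed
  have mm: "XX k (ins_last q' r') mod (?K+1) = int r - int ?N + ?K"
  proof -
    have "0 < ?K+1" "0 \<le> int r - int ?N + ?K" "int r - int ?N + ?K < ?K+1" using rb by auto
    from dm[OF this, of "int (des p)"] show ?thesis unfolding XXq by blast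
  qed
  have "phi k (ins_last q' r') = ins_last (phi k q') r"
    using phi_step[of "ins_last q' r'" k] lq' Suc(1) mm by simp
  hence pp: "phi k (phi k p) = p" using phip IH(4) q'_def F1 by simp
  show ?case using pp phip qA dq r'i unfolding a_def b_def by simp
qed

theorem theorem2p1:
  fixes n k :: nat and i j :: int
  assumes "n \<ge> 1" and "0 \<le> i" and "i \<le> int n - 1" and "0 \<le> j" and "j \<le> int k"
  defines "i' \<equiv> ((int n + 1) * int k - (int k + 1) * i - j) div (int k + 1)"
  defines "j' \<equiv> (int n + 1) * int k - (int k + 1) * i - j - (int k + 1) * i'"
  shows "bij_betw (phi k) (Gamma k n i j) (Gamma k n i' j')"
proof -
  define X where "X = (int n + 1) * int k - (int k + 1) * i - j"
  have i'X: "i' = X div (int k + 1)" unfolding i'_def X_def ..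
  have j'X: "j' = X mod (int k + 1)" unfolding j'_def i'_def X_def by (metis minus_mult_div_eq_mod)
  have Xe: "X = (int k + 1) * i' + j'" unfolding i'X j'X by simp
  have len: "\<And>p. p \<in> A n k \<Longrightarrow> length p = n" unfolding A_def is_perm_def by auto
  have fw: "phi k p \<in> Gamma k n i' j'" if p: "p \<in> Gamma k n i j" for p
  proof -
    have pA: "p \<in> A n k" and d: "int (des p) = i" and l: "int (last p) = int n - int k + j"
      using p unfolding Gamma_def by auto
    have "XX k p = X" unfolding XX_def X_def using len[OF pA] d l by simp
    thus ?thesis using main[OF assms(1) pA] unfolding Gamma_def i'X j'X by simp
  qed
  have bw: "phi k q \<in> Gamma k n i j" if q: "q \<in> Gamma k n i' j'" for q
  proof -
    have qA: "q \<in> A n k" and d: "int (des q) = i'" and l: "int (last q) = int n - int k + j'"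
      using q unfolding Gamma_def by auto
    have "XX k q = (int n + 1) * int k - (int k + 1) * i' - j'" unfolding XX_def using len[OF qA] d l by simp
    also have "\<dots> = (int k + 1) * i + j" using Xe unfolding X_def by simp
    finally have e: "XX k q = (int k + 1) * i + j" .
    have "0 < int k + 1" "0 \<le> j" "j < int k + 1" using assms by auto
    from dm[OF this, of i] have "XX k q div (int k + 1) = i" "XX k q mod (int k + 1) = j" unfolding e by auto
    thus ?thesis using main[OF assms(1) qA] unfolding Gamma_def by simp
  qed
  have inv: "phi k (phi k p) = p" if "p \<in> A n k" for p using main[OF assms(1) that] by simp
  show ?thesis
  proof (rule bij_betw_byWitness[where f'="phi k"])
    show "\<forall>a\<in>Gamma k n i j. phi k (phi k a) = a" using inv unfolding Gamma_def by auto
    show "\<forall>a\<in>Gamma k n i' j'. phi k (phi k a) = a" using inv unfolding Gamma_def by auto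
    show "phi k ` Gamma k n i j \<subseteq> Gamma k n i' j'" using fw by auto
    show "phi k ` Gamma k n i' j' \<subseteq> Gamma k n i j" using bw by auto
  qed
qed

end
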